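(* For any history $\mathcal{F}_{t-1}$, conditioned on the event $E^{\widetilde f}(t)$, \[ \mathbb{P}\big(\mathbf{x}_t\in\mathcal{X}\setminus S_t\mid\mathcal{F}_{t-1}\big)\ge p-1/t^2,\qquad p=\frac{1}{4e\sqrt\pi}. \]
   Context: $\mathcal{X}$ finite subset of the unit ball of $\mathbb{R}^d$; $f\sim\mathcal{GP}(0,k)$, $k$ the exact NTK with $k\le K_0$, $|f|\le B'$; noise $\mathcal{N}(0,\sigma^2)$; $\delta\in(0,1)$, horizon $T$; $\mathbf{x}^*$ maximizes $f$, $\Delta(\mathbf{x})=f(\mathbf{x}^* )-f(\mathbf{x})$. $\widetilde k$ is the empirical NTK (gradient inner product of a network with $L+1$ layers at initialization) with $|\widetilde k-k|\le(L+1)\varepsilon$ on $\mathcal{X}\times\mathcal{X}$, $(L+1)\varepsilon\le1$, $\sigma^2\le1$, $\hat K_0=\max\{1,K_0\}$. $\beta_t=2\log(2\pi^2t^2|\mathcal{X}|/(3\delta))$, $c_t=\beta_t(1+\sqrt{2\log(|\mathcal{X}|t^2)})$. Queries indexed sequentially; $\mathrm{fb}[t]$ largest index observed when $\mathbf{x}_t$ is chosen ($t-\mathrm{fb}[t]\le B$); $\mathcal{F}_{t-1}$ the history. $\widetilde\mu_{\mathrm{fb}[t]},\widetilde\sigma_{\mathrm{fb}[t]}$: GP posterior mean/std with kernel $\widetilde k$ given observations $1,\dots,\mathrm{fb}[t]$; given $\mathcal{F}_{t-1}$, $\widetilde f_t\sim\mathcal{GP}(\widetilde\mu_{\mathrm{fb}[t]},\beta_t^2\widetilde\sigma^2_{\mathrm{fb}[t]})$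 and $\mathbf{x}_t=\arg\max_{\mathbf{x}}\widetilde f_t(\mathbf{x})$. $\epsilon_{m,t}=2\hat K_0\frac{t^2(L+1)\varepsilon}{\sigma^4}(B'+\sigma\sqrt{2\log(4T/\delta)})+\beta_t\sqrt{(L+1)\varepsilon(1+4\hat K_0^2t^2/\sigma^4)}$. $E^{\widetilde f}(t)$: $|\widetilde\mu_{\mathrm{fb}[t]}(\mathbf{x})-f(\mathbf{x})|\le\beta_t\widetilde\sigma_{\mathrm{fb}[t]}(\mathbf{x})+\epsilon_{m,t}$ for all $\mathbf{x}$. Saturated set: $S_t=\{\mathbf{x}\in\mathcal{X}:\Delta(\mathbf{x})>c_t\widetilde\sigma_{\mathrm{fb}[t]}(\mathbf{x})+2\epsilon_{m,t}\}$. *)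

theory Defs
  imports "HOL-Probability.Probability" "Jordan_Normal_Form.Gauss_Jordan_Elimination"
begin

definition gauss_law :: "real \<Rightarrow> real \<Rightarrow> real measure" where
  "gauss_law m v = (if v > 0 then density lborel (normal_density m (sqrt v)) else return borel m)"

definition gaussian_process_on ::
  "'w measure \<Rightarrow> 'a set \<Rightarrow> ('w \<Rightarrow> 'a \<Rightarrow> real) \<Rightarrow> ('a \<Rightarrow> real) \<Rightarrow> ('a \<Rightarrow> 'a \<Rightarrow> real) \<Rightarrow> bool" where
  "gaussian_process_on M X F m C \<longleftrightarrow>
     (\<forall>x\<in>X. (\<lambda>w. F w x) \<in> borel_measurable M) \<and>
     (\<forall>c :: 'a \<Rightarrow> real.
        distr M borel (\<lambda>w. \<Sum>x\<in>X. c x * F w x)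
          = gauss_law (\<Sum>x\<in>X. c x * m x) (\<Sum>x\<in>X. \<Sum>y\<in>X. c x * c y * C x y))"

text \<open>Observation i (1 \<le> i \<le> n) is the pair (xs i, ys i); matrix/vector index j corresponds
  to observation j+1.\<close>
definition gram :: "('a \<Rightarrow> 'a \<Rightarrow> real) \<Rightarrow> (nat \<Rightarrow> 'a) \<Rightarrow> nat \<Rightarrow> real mat" where
  "gram kt xs n = Matrix.mat n n (\<lambda>(i, j). kt (xs (Suc i)) (xs (Suc j)))"

definition kvec :: "('a \<Rightarrow> 'a \<Rightarrow> real) \<Rightarrow> (nat \<Rightarrow> 'a) \<Rightarrow> nat \<Rightarrow> 'a \<Rightarrow> real vec" where
  "kvec kt xs n x = Matrix.vec n (\<lambda>i. kt x (xs (Suc i)))"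

definition yvec :: "(nat \<Rightarrow> real) \<Rightarrow> nat \<Rightarrow> real vec" where
  "yvec ys n = Matrix.vec n (\<lambda>i. ys (Suc i))"

definition reg_inv :: "('a \<Rightarrow> 'a \<Rightarrow> real) \<Rightarrow> real \<Rightarrow> (nat \<Rightarrow> 'a) \<Rightarrow> nat \<Rightarrow> real mat" where
  "reg_inv kt s2 xs n = the (mat_inverse (gram kt xs n + s2 \<cdot>\<^sub>m 1\<^sub>m n))"

definition post_mean ::
  "('a \<Rightarrow> 'a \<Rightarrow> real) \<Rightarrow> real \<Rightarrow> (nat \<Rightarrow> 'a) \<Rightarrow> (nat \<Rightarrow> real) \<Rightarrow> nat \<Rightarrow> 'a \<Rightarrow> real" where
  "post_mean kt s2 xs ys n x = scalar_prod (kvec kt xs n x) (reg_inv kt s2 xs n *\<^sub>v yvec ys n)"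

definition post_cov ::
  "('a \<Rightarrow> 'a \<Rightarrow> real) \<Rightarrow> real \<Rightarrow> (nat \<Rightarrow> 'a) \<Rightarrow> nat \<Rightarrow> 'a \<Rightarrow> 'a \<Rightarrow> real" where
  "post_cov kt s2 xs n x y = kt x y - scalar_prod (kvec kt xs n x) (reg_inv kt s2 xs n *\<^sub>v kvec kt xs n y)"

definition post_sd :: "('a \<Rightarrow> 'a \<Rightarrow> real) \<Rightarrow> real \<Rightarrow> (nat \<Rightarrow> 'a) \<Rightarrow> nat \<Rightarrow> 'a \<Rightarrow> real" where
  "post_sd kt s2 xs n x = sqrt (post_cov kt s2 xs n x x)"

definition beta_t :: "nat \<Rightarrow> nat \<Rightarrow> real \<Rightarrow> real" where
  "beta_t t cardX \<delta> = 2 * ln (2 * pi^2 * real t^2 * real cardX / (3 * \<delta>))"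

definition c_t :: "nat \<Rightarrow> nat \<Rightarrow> real \<Rightarrow> real" where
  "c_t t cardX \<delta> = beta_t t cardX \<delta> * (1 + sqrt (2 * ln (real cardX * real t^2)))"

text \<open>epsilon_{m,t}; Lp1eps stands for (L+1)*epsilon.\<close>
definition eps_mt ::
  "nat \<Rightarrow> nat \<Rightarrow> real \<Rightarrow> real \<Rightarrow> real \<Rightarrow> real \<Rightarrow> real \<Rightarrow> nat \<Rightarrow> real" where
  "eps_mt t cardX \<delta> K0hat Lp1eps \<sigma> B' T =
     2 * K0hat * (real t^2 * Lp1eps / \<sigma>^4) * (B' + \<sigma> * sqrt (2 * ln (4 * real T / \<delta>)))
     + beta_t t cardX \<delta> * sqrt (Lp1eps * (1 + 4 * K0hat^2 * real t^2 / \<sigma>^4))"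

end

theory Submission
  imports Defs "Jordan_Normal_Form.Determinant"
begin


lemma gauss_lower:
  fixes m s :: real assumes s: "0 < s"
  shows "measure (density lborel (normal_density m s)) {y. m + s \<le> y} \<ge> 1 / (4 * exp 1 * sqrt pi)"
proof -
  interpret P: prob_space "density lborel (normal_density m s)" using s by (rule prob_space_normal_density)
  define c where "c = exp (-2) / (s * sqrt (2*pi))"
  have c0: "c \<ge> 0" using s by (simp add: c_def)
  have pt: "ennreal c * indicator {m + s .. m + 2 * s} y \<le> ennreal (normal_density m s y) * indicator {y. m + s \<le> y} y" for y
  proof (cases "y \<in> {m + s .. m + 2 * s}")
    case True
    have "(y - m)^2 \<le> (2* s)^2" using True s by (intro power_mono) auto
    hence "-2 \<le> -((y - m)^2) / (2 * s^2)" using s by (simp add: field_simps power2_eq_square)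
    hence "exp (-2) \<le> exp (- ((y - m)^2) / (2 * s^2))" by simp
    moreover have "sqrt (2 * pi * s^2) = s * sqrt (2*pi)" using s by (simp add: real_sqrt_mult)
    ultimately have "exp (-2) / (s * sqrt (2*pi)) \<le> exp (- ((y - m)^2) / (2 * s^2)) / sqrt (2 * pi * s^2)"
      by (simp only:) (rule divide_right_mono, simp, simp add: less_imp_le[OF s])
    hence "c \<le> normal_density m s y" unfolding c_def normal_density_def by simp
    thus ?thesis using True by (simp add: indicator_def)
  qed (simp add: indicator_def)
  have "emeasure (density lborel (normal_density m s)) {y. m + s \<le> y}
      = (\<integral>\<^sup>+ y. ennreal (normal_density m s y) * indicator {y. m + s \<le> y} y \<partial>lborel)"
    by (subst emeasure_density) auto
  also have "\<dots> \<ge> (\<integral>\<^sup>+ y. ennreal c * indicator {m + s .. m + 2 * s} y \<partial>lborel)"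
    by (intro nn_integral_mono pt)
  finally have "emeasure (density lborel (normal_density m s)) {y. m + s \<le> y} \<ge> ennreal c * ennreal s"
    using s by (simp add: nn_integral_cmult_indicator)
  hence "ennreal (measure (density lborel (normal_density m s)) {y. m + s \<le> y}) \<ge> ennreal (c * s)"
    using P.emeasure_eq_measure c0 s by (simp add: ennreal_mult)
  hence A: "measure (density lborel (normal_density m s)) {y. m + s \<le> y} \<ge> c * s"
    by (simp add: ennreal_le_iff[symmetric] del: ennreal_le_iff)
  have "c * s = exp (-2) / sqrt (2*pi)" using s by (simp add: c_def)
  also have "\<dots> = 1 / (exp 1 * exp 1 * sqrt 2 * sqrt pi)"
  proof -
    have "exp (-2::real) = 1 / (exp 1 * exp 1)" by (simp add: exp_minus mult_exp_exp inverse_eq_divide)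
    moreover have "sqrt (2*pi) = sqrt 2 * sqrt pi" by (simp add: real_sqrt_mult)
    ultimately show ?thesis by simp
  qed
  also have "\<dots> \<ge> 1 / (4 * exp 1 * sqrt pi)"
  proof -
    have "exp 1 < (2.72::real)" using e_less_272 by simp
    moreover have "sqrt 2 < (1.415::real)" by (rule real_less_lsqrt) (auto simp: power2_eq_square)
    ultimately have "exp 1 * sqrt 2 \<le> (2.72::real) * 1.415"
      by (intro mult_mono) auto
    hence "exp 1 * sqrt 2 \<le> 4" by simp
    hence "(exp 1 * sqrt 2) * (exp 1 * sqrt pi) \<le> 4 * (exp 1 * sqrt pi)"
      by (rule mult_right_mono) simp
    hence "exp 1 * exp 1 * sqrt 2 * sqrt pi \<le> 4 * exp 1 * sqrt pi"
      by (simp only: mult_ac)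
    thus ?thesis by (intro divide_left_mono) (auto intro!: mult_pos_pos)
  qed
  finally show ?thesis using A by linarith
qed

lemma gauss_upper:
  fixes m s a :: real assumes s: "0 < s" and a: "0 \<le> a"
  shows "measure (density lborel (normal_density m s)) {y. m + a * s < y} \<le> exp (-(a^2)/2)"
proof -
  interpret P: prob_space "density lborel (normal_density m s)" using s by (rule prob_space_normal_density)
  interpret Q: prob_space "density lborel (normal_density (m + a * s) s)" using s by (rule prob_space_normal_density)
  have pt: "ennreal (normal_density m s y) * indicator {y. m + a * s < y} y
      \<le> ennreal (exp (-(a^2)/2)) * ennreal (normal_density (m + a * s) s y)" for y
  proof (cases "m + a * s < y")
    case True
    define z where "z = (y - m) / s"
    have yz: "y - m = s * z" using s by (simp add: z_def)
    have "z \<ge> a" using True s by (simp add: z_def field_simps)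
    hence "a * (z - a) \<ge> 0" using a by simp
    moreover have "z^2/2 - (a^2/2 + (z-a)^2/2) = a * (z - a)" by (simp add: power2_eq_square field_simps)
    ultimately have key: "z^2/2 \<ge> a^2/2 + (z-a)^2/2" by linarith
    have e1: "- ((y - m)^2) / (2 * s^2) = -(z^2)/2" using s by (simp add: yz power_mult_distrib)
    have yz2: "y - (m + a * s) = s * (z - a)" using yz by (simp add: algebra_simps)
    have e2: "- ((y - (m + a * s))^2) / (2 * s^2) = -((z-a)^2)/2" using s
      unfolding yz2 by (simp add: power_mult_distrib)
    have "exp (-(z^2)/2) \<le> exp (-(a^2)/2) * exp (-((z-a)^2)/2)"
      using key by (simp add: mult_exp_exp)
    hence "1 / sqrt (2 * pi * s\<^sup>2) * exp (-(z^2)/2) \<le> 1 / sqrt (2 * pi * s\<^sup>2) * (exp (-(a^2)/2) * exp (-((z-a)^2)/2))"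
      by (rule mult_left_mono) simp
    hence "normal_density m s y \<le> exp (-(a^2)/2) * normal_density (m + a * s) s y"
      unfolding normal_density_def e1 e2 by (simp only: mult_ac)
    thus ?thesis using True by (simp add: ennreal_mult[symmetric])
  qed simp
  have "emeasure (density lborel (normal_density m s)) {y. m + a * s < y}
      = (\<integral>\<^sup>+ y. ennreal (normal_density m s y) * indicator {y. m + a * s < y} y \<partial>lborel)"
    by (subst emeasure_density) auto
  also have "\<dots> \<le> (\<integral>\<^sup>+ y. ennreal (exp (-(a^2)/2)) * ennreal (normal_density (m + a * s) s y) \<partial>lborel)"
    by (intro nn_integral_mono pt)
  also have "\<dots> = ennreal (exp (-(a^2)/2)) * (\<integral>\<^sup>+ y. ennreal (normal_density (m + a * s) s y) \<partial>lborel)"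
    by (rule nn_integral_cmult) auto
  also have "(\<integral>\<^sup>+ y. ennreal (normal_density (m + a * s) s y) \<partial>lborel) = 1"
    using Q.emeasure_space_1 by (simp add: emeasure_density)
  finally show ?thesis using P.emeasure_eq_measure
    by (simp add: ennreal_le_iff[symmetric] del: ennreal_le_iff)
qed



lemma gram_quad:
  fixes g :: "'a \<Rightarrow> 'b::real_inner"
  assumes kt: "\<forall>x y. kt x y = inner (g x) (g y)" and w: "w \<in> carrier_vec n"
  shows "w \<bullet> (gram kt xs n *\<^sub>v w) = inner (\<Sum>i<n. w $ i *\<^sub>R g (xs (Suc i))) (\<Sum>i<n. w $ i *\<^sub>R g (xs (Suc i)))"
proof -
  have "w \<bullet> (gram kt xs n *\<^sub>v w) = (\<Sum>i<n. w $ i * (\<Sum>j<n. kt (xs (Suc i)) (xs (Suc j)) * w $ j))"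
    using w unfolding gram_def scalar_prod_def
    by (intro sum.cong) (auto simp: lessThan_atLeast0 scalar_prod_def)
  also have "\<dots> = inner (\<Sum>i<n. w $ i *\<^sub>R g (xs (Suc i))) (\<Sum>i<n. w $ i *\<^sub>R g (xs (Suc i)))"
    unfolding inner_sum_left by (simp add: inner_sum_right kt sum_distrib_left mult_ac)
  finally show ?thesis .
qed

lemma post_cov_nonneg:
  fixes g :: "'a \<Rightarrow> 'b::real_inner"
  assumes kt: "\<forall>x y. kt x y = inner (g x) (g y)" and s: "s2 > 0"
  shows "post_cov kt s2 xs n x x \<ge> 0"
proof -
  define A where "A = gram kt xs n + s2 \<cdot>\<^sub>m 1\<^sub>m n"
  have Gc: "gram kt xs n \<in> carrier_mat n n" by (simp add: gram_def)
  have Ac: "A \<in> carrier_mat n n" by (simp add: A_def gram_def)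
  have dl: "(\<Sum>ia = 0..<n. s2 * (if ia = i then 1 else 0) * v $ ia) = s2 * v $ i" if "i < n" for i v
  proof -
    have "(\<Sum>ia = 0..<n. s2 * (if ia = i then 1 else 0) * v $ ia) = (\<Sum>ia = 0..<n. if ia = i then s2 * v $ ia else 0)"
      by (intro sum.cong) auto
    also have "\<dots> = s2 * v $ i" using that by simp
    finally show ?thesis .
  qed
  have Av: "A *\<^sub>v v = gram kt xs n *\<^sub>v v + s2 \<cdot>\<^sub>v v" if "v \<in> carrier_vec n" for v
    using that Gc unfolding A_def
    by (subst add_mult_distrib_mat_vec[of _ n n]) (auto intro!: eq_vecI simp: scalar_prod_def dl)
  have Kq: "v \<bullet> (A *\<^sub>v v) = v \<bullet> (gram kt xs n *\<^sub>v v) + s2 * (v \<bullet> v)" if v: "v \<in> carrier_vec n" for v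
    using v Gc by (simp add: Av scalar_prod_add_distrib[of _ n])
  have "Determinant.det A \<noteq> 0"
  proof
    assume "Determinant.det A = 0"
    then obtain v where v: "v \<in> carrier_vec n" "v \<noteq> 0\<^sub>v n" "A *\<^sub>v v = 0\<^sub>v n"
      using det_0_iff_vec_prod_zero_field[OF Ac] by auto
    obtain i where i: "i < n" "v $ i \<noteq> 0"
    proof (rule ccontr)
      assume "\<not> thesis"
      hence "\<forall>i<n. v $ i = 0" using that by auto
      hence "v = 0\<^sub>v n" using v(1) by (intro eq_vecI) auto
      thus False using v(2) by simp
    qed
    have sq: "0 < v $ i * v $ i" using i(2) not_real_square_gt_zero by blast
    have vv: "v \<bullet> v > 0" unfolding scalar_prod_def using v(1) i sq
      by (intro sum_pos2[of _ i]) auto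
    have "0 = v \<bullet> (A *\<^sub>v v)" using v by simp
    also have "\<dots> = v \<bullet> (gram kt xs n *\<^sub>v v) + s2 * (v \<bullet> v)" by (rule Kq[OF v(1)])
    also have "v \<bullet> (gram kt xs n *\<^sub>v v) \<ge> 0" using gram_quad[OF kt v(1)] by simp
    hence "v \<bullet> (gram kt xs n *\<^sub>v v) + s2 * (v \<bullet> v) > 0" using vv s by (simp add: add_nonneg_pos)
    finally show False by simp
  qed
  obtain R where R: "mat_inverse A = Some R"
  proof (cases "mat_inverse A")
    case None
    have "A \<notin> Units (ring_mat TYPE(real) n ())" by (rule mat_inverse(1)[OF Ac None])
    moreover have "A \<in> Units (ring_mat TYPE(real) n ())" by (rule det_non_zero_imp_unit[OF Ac]) fact
    ultimately have False by blast
    thus ?thesis by blast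
  next
    case (Some R')
    thus ?thesis using that by blast
  qed
  have AR: "A * R = 1\<^sub>m n" and Rc: "R \<in> carrier_mat n n" using mat_inverse(2)[OF Ac R] by auto
  define kx where "kx = kvec kt xs n x"
  have kxc: "kx \<in> carrier_vec n" by (simp add: kx_def kvec_def)
  define w where "w = R *\<^sub>v kx"
  have wc: "w \<in> carrier_vec n" using Rc kxc by (simp add: w_def)
  have "A *\<^sub>v w = kx" unfolding w_def using Ac Rc kxc
    by (simp add: assoc_mult_mat_vec[symmetric] AR)
  hence wkx: "w \<bullet> kx = w \<bullet> (gram kt xs n *\<^sub>v w) + s2 * (w \<bullet> w)" using Kq[OF wc] by simp
  define u where "u = (\<Sum>i<n. w $ i *\<^sub>R g (xs (Suc i)))"
  have uu: "inner u u = w \<bullet> (gram kt xs n *\<^sub>v w)" unfolding u_def by (rule gram_quad[OF kt wc, symmetric])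
  have kxw: "kx \<bullet> w = inner (g x) u" unfolding u_def kx_def kvec_def scalar_prod_def using wc
    by (auto simp: inner_sum_right kt lessThan_atLeast0 mult.commute intro!: sum.cong)
  have pc: "post_cov kt s2 xs n x x = inner (g x) (g x) - inner (g x) u"
    unfolding post_cov_def reg_inv_def A_def[symmetric] R option.sel kx_def[symmetric] w_def[symmetric] kxw using kt by simp
  have ww: "w \<bullet> w \<ge> 0" unfolding scalar_prod_def by (intro sum_nonneg) auto
  have "inner (g x - u) (g x - u) = inner (g x) (g x) - 2 * inner (g x) u + inner u u"
    by (simp add: inner_diff_left inner_diff_right inner_commute)
  moreover have "w \<bullet> kx = kx \<bullet> w" by (rule comm_scalar_prod[OF wc kxc])
  ultimately have "post_cov kt s2 xs n x x = inner (g x - u) (g x - u) + s2 * (w \<bullet> w)"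
    using pc uu wkx kxw by simp
  thus ?thesis using ww s by (simp add: add_nonneg_nonneg)
qed

theorem lemma15:
  fixes X :: "(real^'d) set"
    and k kt :: "real^'d \<Rightarrow> real^'d \<Rightarrow> real"
    and g :: "real^'d \<Rightarrow> real^'p"
    and f :: "real^'d \<Rightarrow> real"
    and xstar :: "real^'d"
    and K0 B' \<sigma> \<delta> \<epsilon> :: real
    and L T t n B :: nat
    and xs :: "nat \<Rightarrow> real^'d" and ys :: "nat \<Rightarrow> real"
    and M :: "'w measure"
    and Ft :: "'w \<Rightarrow> real^'d \<Rightarrow> real"
    and xt :: "'w \<Rightarrow> real^'d"
  assumes X_fin: "finite X" and X_ball: "X \<subseteq> cball 0 1"
    and k_bound: "\<forall>x\<in>X. \<forall>y\<in>X. k x y \<le> K0"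
    and f_bound: "\<forall>x\<in>X. \<bar>f x\<bar> \<le> B'"
    and \<sigma>_pos: "0 < \<sigma>" and \<sigma>_le: "\<sigma>^2 \<le> 1"
    and \<delta>: "0 < \<delta>" "\<delta> < 1"
    and t: "1 \<le> t" "t \<le> T"
    and xstar: "xstar \<in> X" "\<forall>x\<in>X. f x \<le> f xstar"
    and kt_ntk: "\<forall>x y. kt x y = inner (g x) (g y)"
    and \<epsilon>: "0 \<le> \<epsilon>" "(real L + 1) * \<epsilon> \<le> 1"
    and kt_approx: "\<forall>x\<in>X. \<forall>y\<in>X. \<bar>kt x y - k x y\<bar> \<le> (real L + 1) * \<epsilon>"
    and fb: "n < t" "t - n \<le> B"
    and hist: "\<forall>i\<in>{1..n}. xs i \<in> X"
    and E: "\<forall>x\<in>X. \<bar>post_mean kt (\<sigma>^2) xs ys n x - f x\<bar>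
              \<le> beta_t t (card X) \<delta> * post_sd kt (\<sigma>^2) xs n x
                 + eps_mt t (card X) \<delta> (max 1 K0) ((real L + 1) * \<epsilon>) \<sigma> B' T"
    and M: "prob_space M"
    and TS: "gaussian_process_on M X Ft (post_mean kt (\<sigma>^2) xs ys n)
               (\<lambda>x y. (beta_t t (card X) \<delta>)^2 * post_cov kt (\<sigma>^2) xs n x y)"
    and xt_rv: "xt \<in> measurable M (count_space UNIV)"
    and xt_argmax: "\<forall>w\<in>space M. xt w \<in> X \<and> (\<forall>y\<in>X. Ft w y \<le> Ft w (xt w))"
  shows "measure M {w\<in>space M. xt w \<in> X -
           {x\<in>X. f xstar - f x > c_t t (card X) \<delta> * post_sd kt (\<sigma>^2) xs n x
                   + 2 * eps_mt t (card X) \<delta> (max 1 K0) ((real L + 1) * \<epsilon>) \<sigma> B' T}}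
         \<ge> 1 / (4 * exp 1 * sqrt pi) - 1 / real t^2"
  proof -
  interpret P: prob_space M by (rule M)
  define \<mu> where "\<mu> = post_mean kt (\<sigma>^2) xs ys n"
  define pc where "pc = (\<lambda>x. post_cov kt (\<sigma>^2) xs n x x)"
  define sd where "sd = post_sd kt (\<sigma>^2) xs n"
  define \<beta> where "\<beta> = beta_t t (card X) \<delta>"
  define \<epsilon>m where "\<epsilon>m = eps_mt t (card X) \<delta> (max 1 K0) ((real L + 1) * \<epsilon>) \<sigma> B' T"
  define a where "a = sqrt (2 * ln (real (card X) * real t^2))"
  define p :: real where "p = 1 / (4 * exp 1 * sqrt pi)"
  have "card X > 0" using X_fin xstar(1) card_gt_0_iff by blast
  hence cX: "card X \<ge> 1" by simp
  have Xt1: "real (card X) * real t^2 \<ge> 1"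
  proof -
    have "real (card X) \<ge> 1" using cX by simp
    moreover have "real t^2 \<ge> 1" using t(1) by simp
    ultimately show ?thesis using mult_mono[of 1 "real (card X)" 1 "real t^2"] by simp
  qed
  have ln0: "ln (real (card X) * real t^2) \<ge> 0" by (rule ln_ge_zero[OF Xt1])
  have a0: "a \<ge> 0" unfolding a_def by (rule real_sqrt_ge_zero) (use ln0 in simp)
  have a2: "a^2 = 2 * ln (real (card X) * real t^2)" unfolding a_def by (rule real_sqrt_pow2) (use ln0 in simp)
  have \<beta>0: "\<beta> > 0"
  proof -
    have "pi^2 > 3^2" using pi_gt3 by (intro power_strict_mono) auto
    hence pi3: "2 * pi^2 > 3" by simp
    have tX: "real t^2 * real (card X) \<ge> 1" using Xt1 by (simp add: mult.commute)
    have "2 * pi^2 * (real t^2 * real (card X)) \<ge> 2 * pi^2 * 1" using tX by (intro mult_left_mono) auto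
    hence A3: "2 * pi^2 * real t^2 * real (card X) > 3" using pi3 by (simp only: mult.assoc mult_1_right)
    have "2 * pi^2 * real t^2 * real (card X) / (3 * \<delta>) > 1" using A3 \<delta> by (subst less_divide_eq_1_pos) auto
    thus ?thesis unfolding \<beta>_def beta_t_def by simp
  qed
  have ct: "c_t t (card X) \<delta> = \<beta> + \<beta> * a" unfolding c_t_def \<beta>_def a_def by (simp add: algebra_simps)
  have pc0: "pc x \<ge> 0" for x unfolding pc_def using post_cov_nonneg[OF kt_ntk, of "\<sigma>^2"] \<sigma>_pos by simp
  have sd_eq: "sd x = sqrt (pc x)" for x by (simp add: sd_def pc_def post_sd_def)
  have Ftm: "(\<lambda>w. Ft w x) \<in> borel_measurable M" if "x \<in> X" for x
    using TS that unfolding gaussian_process_on_def by blast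
  have D: "measure M {w\<in>space M. Ft w x \<in> B} = measure (gauss_law (\<mu> x) (\<beta>^2 * pc x)) B"
    if x: "x \<in> X" and B: "B \<in> sets borel" for x B
  proof -
    define c where "c = (\<lambda>y. if y = x then 1 else (0::real))"
    have s1: "(\<Sum>y\<in>X. c y * h y) = h x" for h :: "real^'d \<Rightarrow> real"
    proof -
      have "(\<Sum>y\<in>X. c y * h y) = (\<Sum>y\<in>X. if y = x then h y else 0)" by (intro sum.cong) (auto simp: c_def)
      thus ?thesis using x X_fin by simp
    qed
    have s2: "(\<Sum>y\<in>X. \<Sum>z\<in>X. c y * c z * h y z) = h x x" for h :: "real^'d \<Rightarrow> real^'d \<Rightarrow> real"
    proof -
      have "(\<Sum>y\<in>X. \<Sum>z\<in>X. c y * c z * h y z) = (\<Sum>y\<in>X. c y * (\<Sum>z\<in>X. c z * h y z))"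
        by (simp add: sum_distrib_left mult.assoc)
      also have "\<dots> = h x x" by (simp add: s1)
      finally show ?thesis .
    qed
    have "distr M borel (\<lambda>w. \<Sum>y\<in>X. c y * Ft w y) = gauss_law (\<Sum>y\<in>X. c y * \<mu> y)
            (\<Sum>y\<in>X. \<Sum>z\<in>X. c y * c z * (\<beta>^2 * post_cov kt (\<sigma>^2) xs n y z))"
      using TS unfolding gaussian_process_on_def \<mu>_def \<beta>_def by blast
    hence "distr M borel (\<lambda>w. Ft w x) = gauss_law (\<mu> x) (\<beta>^2 * pc x)"
      by (simp only: s1 s2 pc_def)
    hence "measure (gauss_law (\<mu> x) (\<beta>^2 * pc x)) B = measure (distr M borel (\<lambda>w. Ft w x)) B" by simp
    also have "\<dots> = measure M ((\<lambda>w. Ft w x) -` B \<inter> space M)" by (rule measure_distr[OF Ftm[OF x] B])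
    finally show ?thesis by (simp add: vimage_def Int_def conj_commute)
  qed
  define H where "H = {w\<in>space M. Ft w xstar \<in> {y. \<mu> xstar + \<beta> * sd xstar \<le> y}}"
  define Bx where "Bx = (\<lambda>x. {w\<in>space M. Ft w x \<in> {y. \<mu> x + \<beta> * a * sd x < y}})"
  have HM: "H \<in> sets M" unfolding H_def using measurable_sets[OF Ftm[OF xstar(1)], of "{y. \<mu> xstar + \<beta> * sd xstar \<le> y}"]
    by (simp add: vimage_def Int_def conj_commute)
  have BM: "Bx x \<in> sets M" if "x \<in> X" for x unfolding Bx_def using measurable_sets[OF Ftm[OF that], of "{y. \<mu> x + \<beta> * a * sd x < y}"]
    by (simp add: vimage_def Int_def conj_commute)
  have p1: "p \<le> 1" unfolding p_def
  proof -
    have "1 \<le> exp (1::real)" by simp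
    moreover have "1 \<le> sqrt pi" using pi_gt3 by simp
    ultimately have "1 * 1 \<le> exp 1 * sqrt pi" by (intro mult_mono) auto
    hence "1 \<le> 4 * exp 1 * sqrt pi" by simp
    thus "1 / (4 * exp 1 * sqrt pi) \<le> 1" by simp
  qed
  have PH: "measure M H \<ge> p"
  proof (cases "pc xstar > 0")
    case True
    have v: "\<beta>^2 * pc xstar > 0" using True \<beta>0 by simp
    have sq: "sqrt (\<beta>^2 * pc xstar) = \<beta> * sd xstar" using \<beta>0 pc0 by (simp add: sd_eq real_sqrt_mult)
    have "measure M H = measure (density lborel (normal_density (\<mu> xstar) (\<beta> * sd xstar))) {y. \<mu> xstar + \<beta> * sd xstar \<le> y}"
      unfolding H_def by (subst D) (auto simp: xstar(1) gauss_law_def v sq)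
    also have "\<dots> \<ge> p" unfolding p_def by (rule gauss_lower) (use \<beta>0 True in \<open>simp add: sd_eq\<close>)
    finally show ?thesis .
  next
    case False
    hence z: "pc xstar = 0" using pc0[of xstar] by simp
    have "measure M H = measure (return borel (\<mu> xstar)) {y. \<mu> xstar + \<beta> * sd xstar \<le> y}"
      unfolding H_def by (subst D) (auto simp: xstar(1) gauss_law_def z)
    also have "\<dots> = 1" by (subst measure_return) (auto simp: sd_eq z)
    finally show ?thesis using p1 by simp
  qed
  have PB: "measure M (Bx x) \<le> 1 / (real (card X) * real t^2)" if x: "x \<in> X" for x
  proof (cases "pc x > 0")
    case True
    have v: "\<beta>^2 * pc x > 0" using True \<beta>0 by simp
    have sq: "sqrt (\<beta>^2 * pc x) = \<beta> * sd x" using \<beta>0 pc0 by (simp add: sd_eq real_sqrt_mult)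
    have "measure M (Bx x) = measure (density lborel (normal_density (\<mu> x) (\<beta> * sd x))) {y. \<mu> x + a * (\<beta> * sd x) < y}"
    proof -
      have seteq: "{y. \<mu> x + \<beta> * a * sd x < y} = {y. \<mu> x + a * (\<beta> * sd x) < y}" by (simp add: mult_ac)
      show ?thesis unfolding Bx_def seteq by (subst D) (auto simp: x gauss_law_def v sq)
    qed
    also have "\<dots> \<le> exp (-(a^2)/2)" by (rule gauss_upper) (use \<beta>0 True a0 in \<open>simp_all add: sd_eq\<close>)
    also have "\<dots> = 1 / (real (card X) * real t^2)" using Xt1 by (simp add: a2 exp_minus inverse_eq_divide)
    finally show ?thesis .
  next
    case False
    hence z: "pc x = 0" using pc0[of x] by simp
    have "measure M (Bx x) = measure (return borel (\<mu> x)) {y. \<mu> x + \<beta> * a * sd x < y}"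
      unfolding Bx_def by (subst D) (auto simp: x gauss_law_def z)
    also have "\<dots> = 0" by (subst measure_return) (auto simp: sd_eq z)
    finally show ?thesis by simp
  qed
  define U where "U = (\<Union>x\<in>X. Bx x)"
  define Tg where "Tg = {w\<in>space M. xt w \<in> X -
           {x\<in>X. f xstar - f x > c_t t (card X) \<delta> * post_sd kt (\<sigma>^2) xs n x
                   + 2 * eps_mt t (card X) \<delta> (max 1 K0) ((real L + 1) * \<epsilon>) \<sigma> B' T}}"
  have UM: "U \<in> sets M" unfolding U_def using BM X_fin by auto
  have TgM: "Tg \<in> sets M"
  proof -
    have "Tg = xt -` (X - {x\<in>X. f xstar - f x > c_t t (card X) \<delta> * post_sd kt (\<sigma>^2) xs n x
                   + 2 * eps_mt t (card X) \<delta> (max 1 K0) ((real L + 1) * \<epsilon>) \<sigma> B' T}) \<inter> space M"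
      unfolding Tg_def by auto
    thus ?thesis using measurable_sets[OF xt_rv] by simp
  qed
  have Eb: "\<bar>\<mu> x - f x\<bar> \<le> \<beta> * sd x + \<epsilon>m" if "x \<in> X" for x
    using E that unfolding \<mu>_def \<beta>_def sd_def \<epsilon>m_def by blast
  have sub: "H - U \<subseteq> Tg"
  proof
    fix w assume w: "w \<in> H - U"
    hence wM: "w \<in> space M" and Hw: "\<mu> xstar + \<beta> * sd xstar \<le> Ft w xstar" by (auto simp: H_def)
    have xtX: "xt w \<in> X" and am: "Ft w xstar \<le> Ft w (xt w)" using xt_argmax wM xstar(1) by auto
    have nB: "Ft w (xt w) \<le> \<mu> (xt w) + \<beta> * a * sd (xt w)" using w xtX wM by (auto simp: U_def Bx_def)
    have E1: "\<mu> (xt w) - f (xt w) \<le> \<beta> * sd (xt w) + \<epsilon>m"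
      by (rule abs_le_D1[OF Eb[OF xtX]])
    have E2': "- (\<mu> xstar - f xstar) \<le> \<beta> * sd xstar + \<epsilon>m"
      by (rule abs_le_D2[OF Eb[OF xstar(1)]])
    hence E2: "f xstar - \<mu> xstar \<le> \<beta> * sd xstar + \<epsilon>m" by simp
    have "\<not> (f xstar - f (xt w) > c_t t (card X) \<delta> * sd (xt w) + 2 * \<epsilon>m)"
    proof
      assume "f xstar - f (xt w) > c_t t (card X) \<delta> * sd (xt w) + 2 * \<epsilon>m"
      hence "f xstar - f (xt w) > \<beta> * sd (xt w) + \<beta> * a * sd (xt w) + 2 * \<epsilon>m"
        unfolding ct by (simp add: algebra_simps)
      thus False using nB E1 E2 Hw am by linarith
    qed
    thus "w \<in> Tg" unfolding Tg_def sd_def \<epsilon>m_def using wM xtX by auto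
  qed
  have "measure M H \<le> measure M (H - U) + measure M U"
  proof -
    have "measure M H \<le> measure M ((H - U) \<union> U)" by (rule P.finite_measure_mono) (use HM UM in auto)
    also have "\<dots> \<le> measure M (H - U) + measure M U" by (rule measure_Un_le) (use HM UM in auto)
    finally show ?thesis .
  qed
  moreover have "measure M (H - U) \<le> measure M Tg" by (rule P.finite_measure_mono[OF sub TgM])
  moreover have "measure M U \<le> 1 / real t^2"
  proof -
    have "measure M U \<le> (\<Sum>x\<in>X. measure M (Bx x))" unfolding U_def
      by (rule P.finite_measure_subadditive_finite) (use X_fin BM in auto)
    also have "\<dots> \<le> (\<Sum>x\<in>X. 1 / (real (card X) * real t^2))" by (intro sum_mono PB)
    also have "\<dots> = 1 / real t^2" using cX by simp
    finally show ?thesis .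
  qed
  ultimately have "measure M Tg \<ge> p - 1 / real t^2" using PH by linarith
  thus ?thesis unfolding Tg_def p_def .
qed

end
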